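(* Let $V$ be a real separable Hilbert space, $T>0$, and let $A$, $B$ be linear operators on $V$ satisfying (A1), (A2), (B1), (B2), (B3), (AB) described in the context. Let $\{U(t,s),0\le s\le t\le T\}$ be the strongly continuous evolution system on $V$ generated by the operators $\bar A(t)=A-Ht^{2H-1}B^2$, $t\in[0,T]$, and set $U_Y(t,s)=S_B(B^H_t-B^H_s)\,U(t-s,0)$ for $0\le s\le t\le T$. Let $F:[0,T]\times V\to V$ be a measurable function such that (i) there exists $\bar L\in L^1([0,T])$ with $\|F(t,x)-F(t,y)\|_V\le \bar L(t)\|x-y\|_V$ for all $x,y\in V$, $t\in[0,T]$; (ii) there exists $\bar K\in L^1([0,T])$ with $\|F(t,0)\|_V\le \bar K(t)$ for all $t\in[0,T]$. Then for every initial value $x\in V$ and for $\mathbb P$-a.e. $\omega\in\Omega$ the equation $$y(t)=U_Y(t,0)x+\int_0^t U_Y(t,r)F\big(r,y(r)\big)\,dr,\qquad t\in[0,T],$$ has a unique solution $y$ in the space $\mathcal C([0,T];V)$.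
   Context: $(\Omega,\mathcal F,\mathbb P)$ is a complete probability space carrying a real-valued fractional Brownian motion $B^H=\{B^H_t,t\ge0\}$ with Hurst parameter $H\in(1/2,1)$, i.e. a centered Gaussian process with $\mathbb E[B^H_tB^H_s]=\frac12(t^{2H}+s^{2H}-|t-s|^{2H})$ (with continuous trajectories). $V$ is a real separable Hilbert space. The assumptions on the linear operators $A,B$ on $V$ are: (A1) $A$ is closed and densely defined with domain $D$; (A2) for some fixed $\omega<0$ the resolvent set of $A$ contains all $\lambda\in\mathbb C$ with $\mathrm{Re}\,\lambda\ge\omega$, and for some $M>0$, $\|R(\lambda,A)\|_{\mathcal L(V)}\le M/(|\lambda-\omega|+1)$ for all such $\lambda$ (so $A$ generates an analytic semigroup and fractional powers $(-A)^\alpha$ are defined); (B1) $D^*:=\mathrm{Dom}(A^* )\subset\mathrm{Dom}((B^* )^2)$; (B2) $B$ is closed, densely defined and generates a strongly continuous group $\{S_B(u),u\in\mathbb R\}$ on $V$; (B3) $B^2$ is closed and $\mathrm{Dom}(B^2)\supset\mathrm{Dom}((-A)^\alpha)$ for some $\alpha\in(0,1)$; (AB) $S_B(u)Ay=AS_B(u)y$ for all $u\in\mathbb R$, $y\in D$. Under (A1), (A2), (B2), (B3) the family $\bar A(t)=A-Ht^{2H-1}B^2$ (with domain $D$), $t\in[0,T]$, generates a strongly continuous evolution system $U(t,s)$ on $V$. *)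

theory Defs
  imports "HOL-Probability.Probability"
begin

text \<open>An unbounded operator is a pair (A, D) of a total function A and its domain D;
  values of A outside D are irrelevant.\<close>

definition lin_op :: "('v::real_vector \<Rightarrow> 'v) \<Rightarrow> 'v set \<Rightarrow> bool" where
  "lin_op A D \<longleftrightarrow> 0 \<in> D \<and>
     (\<forall>x\<in>D. \<forall>y\<in>D. x + y \<in> D \<and> A (x + y) = A x + A y) \<and>
     (\<forall>c x. x \<in> D \<longrightarrow> c *\<^sub>R x \<in> D \<and> A (c *\<^sub>R x) = c *\<^sub>R A x)"

definition closed_op :: "('v::real_normed_vector \<Rightarrow> 'v) \<Rightarrow> 'v set \<Rightarrow> bool" where
  "closed_op A D \<longleftrightarrow> closed ((\<lambda>x. (x, A x)) ` D)"

definition densely_defined :: "'v::real_normed_vector set \<Rightarrow> bool" where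
  "densely_defined D \<longleftrightarrow> closure D = UNIV"

text \<open>Resolvent condition (A2), expressed on the complexification V x V of the real space V:
  for lambda = a + i b the operator lambda - A acts on D x D by
  (x,y) |-> (a x - b y - A x, b x + a y - A y).  The condition says: for every lambda with
  Re lambda >= w this is onto V x V and satisfies the a-priori bound
  norm (x,y) <= M/(|lambda - w| + 1) * norm ((lambda - A)(x,y)), i.e. lambda is in the
  resolvent set and the resolvent has norm at most M/(|lambda - w| + 1).\<close>

definition cplx_shift :: "('v::real_vector \<Rightarrow> 'v) \<Rightarrow> complex \<Rightarrow> 'v \<times> 'v \<Rightarrow> 'v \<times> 'v" where
  "cplx_shift A l p = (Re l *\<^sub>R fst p - Im l *\<^sub>R snd p - A (fst p),
                       Im l *\<^sub>R fst p + Re l *\<^sub>R snd p - A (snd p))"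

definition resolvent_condition ::
  "('v::real_normed_vector \<Rightarrow> 'v) \<Rightarrow> 'v set \<Rightarrow> real \<Rightarrow> real \<Rightarrow> bool" where
  "resolvent_condition A D w M \<longleftrightarrow>
     (\<forall>l::complex. Re l \<ge> w \<longrightarrow>
        (\<forall>q. \<exists>p \<in> D \<times> D. cplx_shift A l p = q) \<and>
        (\<forall>p \<in> D \<times> D. norm p \<le> M / (cmod (l - complex_of_real w) + 1) * norm (cplx_shift A l p)))"

definition generates_C0_semigroup ::
  "('v::real_normed_vector \<Rightarrow> 'v) \<Rightarrow> 'v set \<Rightarrow> (real \<Rightarrow> 'v \<Rightarrow> 'v) \<Rightarrow> bool" where
  "generates_C0_semigroup A D S \<longleftrightarrow>
     (\<forall>t\<ge>0. bounded_linear (S t)) \<and> S 0 = id \<and>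
     (\<forall>s\<ge>0. \<forall>t\<ge>0. S (s + t) = S s \<circ> S t) \<and>
     (\<forall>x. continuous_on {0..} (\<lambda>t. S t x)) \<and>
     D = {x. \<exists>y. ((\<lambda>h. (1 / h) *\<^sub>R (S h x - x)) \<longlongrightarrow> y) (at_right 0)} \<and>
     (\<forall>x\<in>D. ((\<lambda>h. (1 / h) *\<^sub>R (S h x - x)) \<longlongrightarrow> A x) (at_right 0))"

definition generates_C0_group ::
  "('v::real_normed_vector \<Rightarrow> 'v) \<Rightarrow> 'v set \<Rightarrow> (real \<Rightarrow> 'v \<Rightarrow> 'v) \<Rightarrow> bool" where
  "generates_C0_group B D S \<longleftrightarrow>
     (\<forall>u. bounded_linear (S u)) \<and> S 0 = id \<and>
     (\<forall>u v. S (u + v) = S u \<circ> S v) \<and>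
     (\<forall>x. continuous_on UNIV (\<lambda>u. S u x)) \<and>
     D = {x. \<exists>y. ((\<lambda>h. (1 / h) *\<^sub>R (S h x - x)) \<longlongrightarrow> y) (at 0)} \<and>
     (\<forall>x\<in>D. ((\<lambda>h. (1 / h) *\<^sub>R (S h x - x)) \<longlongrightarrow> B x) (at 0))"

definition semigroup_of :: "('v::real_normed_vector \<Rightarrow> 'v) \<Rightarrow> 'v set \<Rightarrow> real \<Rightarrow> 'v \<Rightarrow> 'v" where
  "semigroup_of A D = (SOME S. generates_C0_semigroup A D S)"

text \<open>Domain of the fractional power (-A)^alpha = range of
  (-A)^(-alpha) x = 1/Gamma(alpha) * int_0^infty t^(alpha-1) e^(tA) x dt.\<close>
definition frac_pow_dom ::
  "('v::{banach, second_countable_topology} \<Rightarrow> 'v) \<Rightarrow> 'v set \<Rightarrow> real \<Rightarrow> 'v set" where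
  "frac_pow_dom A D \<alpha> =
     range (\<lambda>x. (1 / Gamma \<alpha>) *\<^sub>R
        (set_lebesgue_integral lborel {0<..} (\<lambda>t. t powr (\<alpha> - 1) *\<^sub>R semigroup_of A D t x)))"

definition adj_dom :: "('v::real_inner \<Rightarrow> 'v) \<Rightarrow> 'v set \<Rightarrow> 'v set" where
  "adj_dom A D = {y. \<exists>z. \<forall>x\<in>D. inner (A x) y = inner x z}"

definition adj :: "('v::real_inner \<Rightarrow> 'v) \<Rightarrow> 'v set \<Rightarrow> 'v \<Rightarrow> 'v" where
  "adj A D y = (THE z. \<forall>x\<in>D. inner (A x) y = inner x z)"

definition adj_sq_dom :: "('v::real_inner \<Rightarrow> 'v) \<Rightarrow> 'v set \<Rightarrow> 'v set" where
  "adj_sq_dom B D = {y \<in> adj_dom B D. adj B D y \<in> adj_dom B D}"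

definition sq_dom :: "('v \<Rightarrow> 'v) \<Rightarrow> 'v set \<Rightarrow> 'v set" where
  "sq_dom B D = {x \<in> D. B x \<in> D}"

definition evolution_system_gen ::
  "(real \<Rightarrow> 'v::real_normed_vector \<Rightarrow> 'v) \<Rightarrow> 'v set \<Rightarrow> real \<Rightarrow> (real \<Rightarrow> real \<Rightarrow> 'v \<Rightarrow> 'v) \<Rightarrow> bool" where
  "evolution_system_gen Abar D T U \<longleftrightarrow>
     (\<forall>s t. 0 \<le> s \<and> s \<le> t \<and> t \<le> T \<longrightarrow> bounded_linear (U t s)) \<and>
     (\<forall>s\<in>{0..T}. U s s = id) \<and>
     (\<forall>s r t. 0 \<le> s \<and> s \<le> r \<and> r \<le> t \<and> t \<le> T \<longrightarrow> U t r \<circ> U r s = U t s) \<and>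
     (\<forall>x. continuous_on {(t, s). 0 \<le> s \<and> s \<le> t \<and> t \<le> T} (\<lambda>(t, s). U t s x)) \<and>
     (\<forall>s t x. 0 \<le> s \<and> s < t \<and> t \<le> T \<longrightarrow>
        U t s x \<in> D \<and>
        ((\<lambda>\<tau>. U \<tau> s x) has_vector_derivative Abar t (U t s x)) (at t within {s..T}))"

definition gaussian_rv :: "'w measure \<Rightarrow> ('w \<Rightarrow> real) \<Rightarrow> bool" where
  "gaussian_rv M X \<longleftrightarrow> X \<in> borel_measurable M \<and>
     ((\<exists>\<mu> \<sigma>. 0 < \<sigma> \<and> distributed M lborel X (normal_density \<mu> \<sigma>)) \<or>
      (\<exists>c. AE \<omega> in M. X \<omega> = c))"

definition fBm :: "'w measure \<Rightarrow> real \<Rightarrow> (real \<Rightarrow> 'w \<Rightarrow> real) \<Rightarrow> bool" where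
  "fBm M H BH \<longleftrightarrow>
     (\<forall>I c. finite I \<and> I \<subseteq> {0..} \<longrightarrow> gaussian_rv M (\<lambda>\<omega>. \<Sum>t\<in>I. c t * BH t \<omega>)) \<and>
     (\<forall>t\<ge>0. integrable M (BH t) \<and> integral\<^sup>L M (BH t) = 0) \<and>
     (\<forall>t\<ge>0. \<forall>s\<ge>0. integrable M (\<lambda>\<omega>. BH t \<omega> * BH s \<omega>) \<and>
        integral\<^sup>L M (\<lambda>\<omega>. BH t \<omega> * BH s \<omega>) =
          (t powr (2 * H) + s powr (2 * H) - \<bar>t - s\<bar> powr (2 * H)) / 2) \<and>
     (\<forall>\<omega>\<in>space M. continuous_on {0..} (\<lambda>t. BH t \<omega>))"

definition UY :: "(real \<Rightarrow> 'v \<Rightarrow> 'v) \<Rightarrow> (real \<Rightarrow> real \<Rightarrow> 'v \<Rightarrow> 'v) \<Rightarrow> (real \<Rightarrow> 'w \<Rightarrow> real)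
    \<Rightarrow> 'w \<Rightarrow> real \<Rightarrow> real \<Rightarrow> 'v \<Rightarrow> 'v" where
  "UY SB U BH \<omega> t s z = SB (BH t \<omega> - BH s \<omega>) (U (t - s) 0 z)"

definition is_solution ::
  "(real \<Rightarrow> 'v::{banach, second_countable_topology} \<Rightarrow> 'v) \<Rightarrow> (real \<Rightarrow> real \<Rightarrow> 'v \<Rightarrow> 'v)
    \<Rightarrow> (real \<Rightarrow> 'w \<Rightarrow> real) \<Rightarrow> 'w \<Rightarrow> (real \<Rightarrow> 'v \<Rightarrow> 'v) \<Rightarrow> real \<Rightarrow> 'v \<Rightarrow> (real \<Rightarrow> 'v) \<Rightarrow> bool" where
  "is_solution SB U BH \<omega> F T x y \<longleftrightarrow>
     continuous_on {0..T} y \<and>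
     (\<forall>t\<in>{0..T}.
        set_integrable lborel {0..t} (\<lambda>r. UY SB U BH \<omega> t r (F r (y r))) \<and>
        y t = UY SB U BH \<omega> t 0 x +
              set_lebesgue_integral lborel {0..t} (\<lambda>r. UY SB U BH \<omega> t r (F r (y r))))"

end

theory Submission
  imports Defs
begin


lemma ubp:
  fixes f :: "'i \<Rightarrow> 'a::banach \<Rightarrow> 'b::real_normed_vector"
  assumes lin: "\<And>i. i \<in> I \<Longrightarrow> bounded_linear (f i)"
    and pw: "\<And>z. \<exists>B. \<forall>i\<in>I. norm (f i z) \<le> B"
  shows "\<exists>C\<ge>0. \<forall>i\<in>I. \<forall>z. norm (f i z) \<le> C * norm z"
proof -
  define E where "E n = {z. \<forall>i\<in>I. norm (f i z) \<le> real n}" for n :: nat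
  have cl: "closed (E n)" for n
  proof -
    have "E n = (\<Inter>i\<in>I. {z. norm (f i z) \<le> real n})" by (auto simp: E_def)
    moreover have "closed {z. norm (f i z) \<le> real n}" if "i \<in> I" for i
      using lin[OF that] by (intro closed_Collect_le continuous_intros)
        (auto intro: linear_continuous_on bounded_linear.linear)
    ultimately show ?thesis by auto
  qed
  have un: "\<Union>(range E) = UNIV"
  proof -
    have "z \<in> \<Union>(range E)" for z
    proof -
    obtain B where B: "\<forall>i\<in>I. norm (f i z) \<le> B" using pw by blast
    obtain n where "B \<le> real n" using real_arch_simple by blast
    then have "z \<in> E n" using B by (auto simp: E_def intro: order_trans)
    then show "z \<in> \<Union>(range E)" by blast
    qed
    then show ?thesis by auto
  qed
  have "\<exists>n. interior (E n) \<noteq> {}"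
  proof (rule ccontr)
    assume "\<not> ?thesis"
    have "euclidean interior_of \<Union>(range E) = {}"
    proof (rule Baire_category_alt)
      show "completely_metrizable_space (euclidean::'a topology) \<or> locally_compact_space euclidean \<and> regular_space euclidean"
        by (rule disjI1, rule completely_metrizable_space_euclidean)
      show "countable (range E)" by simp
      fix S assume "S \<in> range E"
      then obtain n where "S = E n" by blast
      show "closedin euclidean S \<and> euclidean interior_of S = {}"
      proof
        show "closedin euclidean S" using cl[of n] \<open>S = E n\<close> closed_closedin by blast
        show "euclidean interior_of S = {}" using \<open>\<not> (\<exists>n. interior (E n) \<noteq> {})\<close> \<open>S = E n\<close> by simp
      qed
    qed
    then show False using un by simp
  qed
  then obtain n z0 where "z0 \<in> interior (E n)" by blast
  then obtain r where r: "r > 0" "ball z0 r \<subseteq> E n"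
    by (meson interior_subset open_contains_ball open_interior subset_trans)
  show ?thesis
  proof (intro exI[of _ "4 * real n / r"] conjI ballI allI)
    show "0 \<le> 4 * real n / r" using r by simp
    fix i z assume i: "i \<in> I"
    interpret bl: bounded_linear "f i" using lin[OF i] .
    show "norm (f i z) \<le> 4 * real n / r * norm z"
    proof (cases "z = 0")
      case True then show ?thesis by (simp add: bl.zero)
    next
      case False
      define c where "c = r / (2 * norm z)"
      have nz: "norm z > 0" using False by simp
      have c: "c > 0" using nz r by (simp add: c_def)
      have "norm (c *\<^sub>R z) = r / 2" using nz r by (simp add: c_def)
      then have "dist z0 (z0 + c *\<^sub>R z) < r" using r by (simp add: dist_norm)
      then have w: "z0 + c *\<^sub>R z \<in> E n" using r(2) by auto
      have z0: "z0 \<in> E n" using r by auto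
      have "f i (z0 + c *\<^sub>R z) - f i z0 = c *\<^sub>R f i z"
        by (simp add: bl.add bl.scaleR)
      then have eq: "f i z = (1/c) *\<^sub>R (f i (z0 + c *\<^sub>R z) - f i z0)"
        using c by simp
      have n1: "norm (f i (z0 + c *\<^sub>R z)) \<le> real n" using w i by (simp add: E_def)
      have n2: "norm (f i z0) \<le> real n" using z0 i by (simp add: E_def)
      have "norm (f i (z0 + c *\<^sub>R z) - f i z0) \<le> real n + real n"
        using norm_triangle_ineq4[of "f i (z0 + c *\<^sub>R z)" "f i z0"] n1 n2 by linarith
      then have "norm (f i z) \<le> (1/c) * (real n + real n)"
        using c by (simp add: eq divide_right_mono)
      also have "\<dots> = 4 * real n / r * norm z" using nz r by (simp add: c_def field_simps)
      finally show ?thesis .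
    qed
  qed
qed


lemma joint_cont:
  fixes f :: "'p::metric_space \<Rightarrow> 'a::real_normed_vector \<Rightarrow> 'b::real_normed_vector"
  assumes lin: "\<And>p. p \<in> S \<Longrightarrow> bounded_linear (f p)"
    and bd: "\<And>p z. p \<in> S \<Longrightarrow> norm (f p z) \<le> C * norm z"
    and cont: "\<And>z. continuous_on S (\<lambda>p. f p z)"
  shows "continuous_on (S \<times> UNIV) (\<lambda>q. f (fst q) (snd q))"
  unfolding continuous_on_def
proof (intro ballI)
  fix q0 :: "'p \<times> 'a" assume "q0 \<in> S \<times> UNIV"
  then obtain p z where q0: "q0 = (p, z)" and p: "p \<in> S" by auto
  let ?F = "at (p, z) within S \<times> UNIV"
  have 1: "((\<lambda>q. f (fst q) z) \<longlongrightarrow> f p z) ?F"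
  proof -
    have "continuous_on (S \<times> UNIV) (\<lambda>q. f (fst q) z)"
      by (rule continuous_on_compose2[OF cont[of z] continuous_on_fst]) auto
    then show ?thesis using p unfolding continuous_on_def by fastforce
  qed
  have 2: "((\<lambda>q. f (fst q) (snd q - z)) \<longlongrightarrow> 0) ?F"
  proof (rule tendsto_0_le[where K = C])
    show "((\<lambda>q. snd q - z) \<longlongrightarrow> 0) ?F"
      by (intro tendsto_eq_intros) auto
    have "norm (f (fst q) (snd q - z)) \<le> norm (snd q - z) * C" if "q \<in> S \<times> (UNIV :: 'a set)" for q
      using bd[of "fst q" "snd q - z"] that by (simp add: mult.commute mem_Times_iff)
    then show "\<forall>\<^sub>F q in ?F. norm (f (fst q) (snd q - z)) \<le> norm (snd q - z) * C"
      by (simp add: eventually_at_filter)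
  qed
  have 3: "((\<lambda>q. f (fst q) (snd q - z) + f (fst q) z) \<longlongrightarrow> 0 + f p z) ?F"
    by (rule tendsto_add[OF 2 1])
  have "\<forall>\<^sub>F q in ?F. f (fst q) (snd q - z) + f (fst q) z = f (fst q) (snd q)"
  proof -
    have "f (fst q) (snd q - z) + f (fst q) z = f (fst q) (snd q)" if "q \<in> S \<times> (UNIV :: 'a set)" for q
    proof -
      interpret bounded_linear "f (fst q)" using lin that by auto
      show ?thesis by (simp add: diff)
    qed
    then show ?thesis by (auto simp: eventually_at_filter)
  qed
  then have "((\<lambda>q. f (fst q) (snd q)) \<longlongrightarrow> f p z) ?F"
    using 3 by (simp add: Lim_transform_eventually)
  then show "((\<lambda>q. f (fst q) (snd q)) \<longlongrightarrow> f (fst q0) (snd q0)) (at q0 within S \<times> UNIV)"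
    by (simp add: q0)
qed

lemma param_cont:
  fixes G :: "real \<Rightarrow> real \<Rightarrow> 'b::{banach, second_countable_topology}"
  assumes meas: "\<And>t. t \<in> {0..T} \<Longrightarrow> (\<lambda>r. indicator {0..t} r *\<^sub>R G t r) \<in> borel_measurable lborel"
    and w: "integrable lborel w" "\<And>r. 0 \<le> w r"
    and bd: "\<And>t r. t \<in> {0..T} \<Longrightarrow> r \<in> {0..t} \<Longrightarrow> norm (G t r) \<le> w r"
    and ct: "\<And>t r. 0 \<le> r \<Longrightarrow> r < t \<Longrightarrow> t \<le> T \<Longrightarrow> continuous (at t within {0..T}) (\<lambda>s. G s r)"
  shows "continuous_on {0..T} (\<lambda>t. set_lebesgue_integral lborel {0..t} (G t))"
proof (rule continuous_on_sequentiallyI)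
  fix u a assume u: "\<forall>n. u n \<in> {0..T}" and a: "a \<in> {0..T}" and lim: "u \<longlonglongrightarrow> a"
  show "(\<lambda>n. set_lebesgue_integral lborel {0..u n} (G (u n))) \<longlonglongrightarrow> set_lebesgue_integral lborel {0..a} (G a)"
    unfolding set_lebesgue_integral_def
  proof (rule integral_dominated_convergence[where w = w])
    show "(\<lambda>r. indicator {0..a} r *\<^sub>R G a r) \<in> borel_measurable lborel" using meas a .
    show "(\<lambda>r. indicator {0..u n} r *\<^sub>R G (u n) r) \<in> borel_measurable lborel" for n using meas u by auto
    show "integrable lborel w" by fact
    show "AE r in lborel. norm (indicator {0..u n} r *\<^sub>R G (u n) r) \<le> w r" for n
      using bd u w(2) by (auto simp: indicator_def)
    have "AE r in lborel. r \<noteq> a" by (rule AE_lborel_singleton)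
    then show "AE r in lborel. (\<lambda>n. indicator {0..u n} r *\<^sub>R G (u n) r) \<longlonglongrightarrow> indicator {0..a} r *\<^sub>R G a r"
    proof eventually_elim
      fix r assume ra: "r \<noteq> a"
      show "(\<lambda>n. indicator {0..u n} r *\<^sub>R G (u n) r) \<longlonglongrightarrow> indicator {0..a} r *\<^sub>R G a r"
      proof (cases "r < 0")
        case True then show ?thesis by (simp add: indicator_def)
      next
        case False
        show ?thesis
        proof (cases "r < a")
          case True
          have ev: "\<forall>\<^sub>F n in sequentially. r < u n" using order_tendstoD(1)[OF lim True] .
          have "(\<lambda>n. G (u n) r) \<longlonglongrightarrow> G a r"
            using ct[of r a] False True a u lim unfolding continuous_within_sequentially
            by (auto simp: o_def)
          moreover have "\<forall>\<^sub>F n in sequentially. G (u n) r = indicator {0..u n} r *\<^sub>R G (u n) r"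
            using ev by eventually_elim (use False in \<open>auto simp: indicator_def\<close>)
          ultimately have "(\<lambda>n. indicator {0..u n} r *\<^sub>R G (u n) r) \<longlonglongrightarrow> G a r"
            by (rule Lim_transform_eventually)
          then show ?thesis using True False by (simp add: indicator_def)
        next
          case False2: False
          then have "a < r" using ra by auto
          have ev: "\<forall>\<^sub>F n in sequentially. u n < r" using order_tendstoD(2)[OF lim \<open>a < r\<close>] .
          have "\<forall>\<^sub>F n in sequentially. 0 = indicator {0..u n} r *\<^sub>R G (u n) r"
            using ev by eventually_elim (auto simp: indicator_def)
          then have "(\<lambda>n. indicator {0..u n} r *\<^sub>R G (u n) r) \<longlonglongrightarrow> 0"
            by (rule Lim_transform_eventually[OF tendsto_const])
          then show ?thesis using \<open>a < r\<close> by (simp add: indicator_def)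
        qed
      qed
    qed
  qed
qed


lemma si_mult_cont:
  fixes L g :: "real \<Rightarrow> real"
  assumes L: "set_integrable lborel A L" and g: "continuous_on UNIV g"
    and A: "A \<in> sets lborel" and B: "\<And>x. x \<in> A \<Longrightarrow> \<bar>g x\<bar> \<le> B"
  shows "set_integrable lborel A (\<lambda>r. L r * g r)"
proof (rule set_integrable_bound[where f = "\<lambda>r. B * L r"])
  show "set_integrable lborel A (\<lambda>r. B * L r)" using L by simp
  have m1: "(\<lambda>x. indicator A x *\<^sub>R L x) \<in> borel_measurable lborel"
    using L unfolding set_integrable_def by (rule borel_measurable_integrable)
  have m2: "g \<in> borel_measurable lborel"
    using borel_measurable_continuous_onI[OF g] by simp
  have "(\<lambda>x. (indicator A x *\<^sub>R L x) * g x) \<in> borel_measurable lborel"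
    using m1 m2 by (rule borel_measurable_times)
  then show "set_borel_measurable lborel A (\<lambda>r. L r * g r)"
    unfolding set_borel_measurable_def by (simp add: mult.assoc)
  show "AE x in lborel. x \<in> A \<longrightarrow> norm (L x * g x) \<le> norm (B * L x)"
  proof (rule AE_I2, rule impI)
    fix x assume "x \<in> A"
    then have "\<bar>g x\<bar> \<le> \<bar>B\<bar>" using B[of x] by linarith
    then have "\<bar>L x\<bar> * \<bar>g x\<bar> \<le> \<bar>L x\<bar> * \<bar>B\<bar>" by (rule mult_left_mono) auto
    then show "norm (L x * g x) \<le> norm (B * L x)"
      by (simp add: abs_mult mult.commute)
  qed
qed

lemma set_integral_mono_set_nonneg:
  fixes f :: "real \<Rightarrow> real"
  assumes f: "set_integrable lborel B f" and A: "A \<in> sets lborel" "A \<subseteq> B"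
    and nn: "\<And>x. 0 \<le> f x"
  shows "set_lebesgue_integral lborel A f \<le> set_lebesgue_integral lborel B f"
proof -
  have fA: "set_integrable lborel A f" using set_integrable_subset[OF f A] .
  show ?thesis
    unfolding set_lebesgue_integral_def
    using fA f unfolding set_integrable_def
    by (intro integral_mono) (use A nn in \<open>auto simp: indicator_def\<close>)
qed

lemma weight:
  fixes L :: "real \<Rightarrow> real"
  assumes L: "set_integrable lborel {0..T} L" "\<And>r. 0 \<le> L r" and d: "0 \<le> d"
    and h: "0 < h" "\<And>s t. 0 \<le> s \<Longrightarrow> s \<le> t \<Longrightarrow> t \<le> T \<Longrightarrow> t - s \<le> h \<Longrightarrow>
        set_lebesgue_integral lborel {s..t} L \<le> d"
  shows "t \<in> {0..T} \<Longrightarrow> set_lebesgue_integral lborel {0..t} (\<lambda>r. L r * 2 powr (r / h)) \<le> 2 * d * 2 powr (t / h)"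
proof -
  define \<rho> where "\<rho> r = (2::real) powr (r / h)" for r
  have \<rho>c: "continuous_on UNIV \<rho>" unfolding \<rho>_def using h(1) by (intro continuous_intros) auto
  have \<rho>mono: "\<rho> r \<le> \<rho> s" if "r \<le> s" for r s
    unfolding \<rho>_def using that h(1) by (intro powr_mono divide_right_mono) auto
  have \<rho>pos: "0 < \<rho> r" for r by (simp add: \<rho>_def)
  have \<rho>h: "\<rho> (t - h) = \<rho> t / 2" for t
  proof -
    have "(t - h) / h = t / h - 1" using h(1) by (simp add: field_simps)
    then show ?thesis by (simp add: \<rho>_def powr_diff)
  qed
  have int: "set_integrable lborel A (\<lambda>r. L r * \<rho> r)" if "A \<in> sets lborel" "A \<subseteq> {0..T}" for A
    by (rule si_mult_cont[OF set_integrable_subset[OF L(1) that] \<rho>c that(1), where B = "\<rho> T"])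
      (use that \<rho>mono \<rho>pos in \<open>auto simp: less_imp_le\<close>)
  have intL: "set_integrable lborel A L" if "A \<in> sets lborel" "A \<subseteq> {0..T}" for A
    by (rule set_integrable_subset[OF L(1) that])
  have piece: "set_lebesgue_integral lborel A (\<lambda>r. L r * \<rho> r) \<le> \<rho> t * d"
    if A: "A \<in> sets lborel" "A \<subseteq> {s..t}" and st: "0 \<le> s" "s \<le> t" "t \<le> T" "t - s \<le> h" for A s t
  proof -
    have As: "A \<subseteq> {0..T}" using A st by auto
    have "set_lebesgue_integral lborel A (\<lambda>r. L r * \<rho> r) \<le> set_lebesgue_integral lborel A (\<lambda>r. L r * \<rho> t)"
      using int[OF A(1) As] intL[OF A(1) As] A(2) L(2) \<rho>mono
      by (intro set_integral_mono) (auto intro!: mult_left_mono)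
    also have "\<dots> = set_lebesgue_integral lborel A L * \<rho> t" by simp
    also have "\<dots> \<le> set_lebesgue_integral lborel {s..t} L * \<rho> t"
      using set_integral_mono_set_nonneg[OF intL[of "{s..t}"] A(1) A(2)] st L(2) \<rho>pos
      by (intro mult_right_mono) (auto simp: less_imp_le)
    also have "\<dots> \<le> d * \<rho> t" using h(2)[OF st] \<rho>pos by (intro mult_right_mono) (auto simp: less_imp_le)
    finally show ?thesis by (simp add: mult.commute)
  qed
  have main: "\<forall>t\<in>{0..T}. t < real (Suc n) * h \<longrightarrow>
      set_lebesgue_integral lborel {0..t} (\<lambda>r. L r * \<rho> r) \<le> 2 * d * \<rho> t" for n
  proof (induction n)
    case 0
    show ?case
    proof (intro ballI impI)
      fix t assume t: "t \<in> {0..T}" "t < real (Suc 0) * h"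
      have "set_lebesgue_integral lborel {0..t} (\<lambda>r. L r * \<rho> r) \<le> \<rho> t * d"
        using t by (intro piece[of _ 0 t]) auto
      also have "\<dots> \<le> 2 * d * \<rho> t" using d \<rho>pos[of t] by (simp add: mult_right_mono)
      finally show "set_lebesgue_integral lborel {0..t} (\<lambda>r. L r * \<rho> r) \<le> 2 * d * \<rho> t" .
    qed
  next
    case (Suc n)
    show ?case
    proof (intro ballI impI)
      fix t assume t: "t \<in> {0..T}" "t < real (Suc (Suc n)) * h"
      show "set_lebesgue_integral lborel {0..t} (\<lambda>r. L r * \<rho> r) \<le> 2 * d * \<rho> t"
      proof (cases "t < real (Suc n) * h")
        case True then show ?thesis using Suc.IH t(1) by blast
      next
        case False
        then have th: "h \<le> t" by (simp add: algebra_simps) (smt (verit) h(1) mult_nonneg_nonneg of_nat_0_le_iff)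
        have t1: "t - h \<in> {0..T}" "t - h < real (Suc n) * h" using t th h(1) by (auto simp: algebra_simps)
        have un: "{0..t} = {0..t-h} \<union> {t-h<..t}" using th h(1) by auto
        have "set_lebesgue_integral lborel {0..t} (\<lambda>r. L r * \<rho> r)
            = set_lebesgue_integral lborel {0..t-h} (\<lambda>r. L r * \<rho> r) + set_lebesgue_integral lborel {t-h<..t} (\<lambda>r. L r * \<rho> r)"
          unfolding un using t th h(1) by (intro set_integral_Un int) auto
        also have "\<dots> \<le> 2 * d * \<rho> (t - h) + \<rho> t * d"
        proof (rule add_mono)
          show "set_lebesgue_integral lborel {0..t-h} (\<lambda>r. L r * \<rho> r) \<le> 2 * d * \<rho> (t - h)"
            using Suc.IH t1 by blast
          show "set_lebesgue_integral lborel {t-h<..t} (\<lambda>r. L r * \<rho> r) \<le> \<rho> t * d"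
            using t1 t th h(1) by (intro piece[of _ "t - h" t]) auto
        qed
        also have "\<dots> = 2 * d * \<rho> t" by (simp add: \<rho>h)
        finally show ?thesis .
      qed
    qed
  qed
  assume t: "t \<in> {0..T}"
  obtain n where "t / h < real n" using reals_Archimedean2 by blast
  then have "t < real (Suc n) * h" using h(1) by (simp add: field_simps)
  then show ?thesis using main[of n] t unfolding \<rho>_def by blast
qed


lemma meas_KF:
  fixes K :: "real \<Rightarrow> real \<Rightarrow> 'v::{banach, second_countable_topology} \<Rightarrow> 'v" and F :: "real \<Rightarrow> 'v \<Rightarrow> 'v"
  assumes t: "0 \<le> t" "t \<le> T"
    and lin: "\<And>t r. 0 \<le> r \<Longrightarrow> r \<le> t \<Longrightarrow> t \<le> T \<Longrightarrow> bounded_linear (K t r)"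
    and bdK: "\<And>t r z. 0 \<le> r \<Longrightarrow> r \<le> t \<Longrightarrow> t \<le> T \<Longrightarrow> norm (K t r z) \<le> C * norm z"
    and cont: "\<And>z. continuous_on {(t, r). 0 \<le> r \<and> r \<le> t \<and> t \<le> T} (\<lambda>(t, r). K t r z)"
    and Fmeas: "(\<lambda>p. F (fst p) (snd p)) \<in> borel_measurable (restrict_space borel ({0..T} \<times> UNIV))"
    and y: "continuous_on {0..T} y"
  shows "(\<lambda>r. indicator {0..t} r *\<^sub>R K t r (F r (y r))) \<in> borel_measurable lborel"
proof -
  have c1: "continuous_on {0..t} (\<lambda>r. (r, y r))"
    using t by (intro continuous_intros continuous_on_subset[OF y]) auto
  have m1: "(\<lambda>r. (r, y r)) \<in> measurable (restrict_space borel {0..t}) (restrict_space borel ({0..T} \<times> UNIV))"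
    by (rule measurable_restrict_space2) (use t borel_measurable_continuous_on_restrict[OF c1] in auto)
  have m2: "(\<lambda>r. F r (y r)) \<in> borel_measurable (restrict_space borel {0..t})"
    using measurable_compose[OF m1 Fmeas] by simp
  have m0: "(\<lambda>r. r) \<in> borel_measurable (restrict_space borel {0..t})"
    by (rule measurable_restrict_space1) simp
  have m3: "(\<lambda>r. (r, F r (y r))) \<in> measurable (restrict_space borel {0..t}) (borel :: (real \<times> 'v) measure)"
    using measurable_Pair[OF m0 m2] by (simp add: borel_prod)
  have m4: "(\<lambda>r. (r, F r (y r))) \<in> measurable (restrict_space borel {0..t}) (restrict_space borel ({0..t} \<times> (UNIV :: 'v set)))"
    by (rule measurable_restrict_space2) (use m3 in \<open>auto simp: space_restrict_space\<close>)
  have ck: "continuous_on ({0..t} \<times> UNIV) (\<lambda>q. K t (fst q) (snd q))"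
  proof (rule joint_cont[where C = C])
    show "bounded_linear (K t r)" if "r \<in> {0..t}" for r using lin that t by auto
    show "norm (K t r z) \<le> C * norm z" if "r \<in> {0..t}" for r z using bdK that t by auto
    fix z
    have "continuous_on {0..t} ((\<lambda>(t, r). K t r z) \<circ> (\<lambda>r. (t, r)))"
      by (rule continuous_on_compose[OF _ continuous_on_subset[OF cont[of z]]])
        (use t in \<open>auto intro!: continuous_intros\<close>)
    then show "continuous_on {0..t} (\<lambda>r. K t r z)" by (simp add: o_def)
  qed
  have m5: "(\<lambda>q. K t (fst q) (snd q)) \<in> borel_measurable (restrict_space borel ({0..t} \<times> (UNIV :: 'v set)))"
    by (rule borel_measurable_continuous_on_restrict[OF ck])
  have "(\<lambda>r. K t r (F r (y r))) \<in> borel_measurable (restrict_space borel {0..t})"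
    using measurable_compose[OF m4 m5] by simp
  then have "(\<lambda>r. indicator {0..t} r *\<^sub>R K t r (F r (y r))) \<in> borel_measurable borel"
    by (subst (asm) borel_measurable_restrict_space_iff) auto
  then show ?thesis by simp
qed


lemma bound_F:
  fixes F :: "real \<Rightarrow> 'v::real_normed_vector \<Rightarrow> 'v"
  assumes "\<forall>t\<in>{0..T}. \<forall>u v. norm (F t u - F t v) \<le> Lb t * norm (u - v)"
    and "\<forall>t\<in>{0..T}. norm (F t 0) \<le> Kb t" and "r \<in> {0..T}" and "norm u \<le> B"
  shows "norm (F r u) \<le> Kb r + \<bar>Lb r\<bar> * B"
proof -
  have "norm (F r u) \<le> norm (F r 0) + norm (F r u - F r 0)" by (rule norm_triangle_sub)
  also have "\<dots> \<le> Kb r + Lb r * norm u"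
  proof (rule add_mono)
    show "norm (F r 0) \<le> Kb r" using assms(2,3) by blast
    have "norm (F r u - F r 0) \<le> Lb r * norm (u - 0)" using assms(1,3) by blast
    then show "norm (F r u - F r 0) \<le> Lb r * norm u" by simp
  qed
  also have "Lb r * norm u \<le> \<bar>Lb r\<bar> * B"
    using assms(4) by (meson abs_ge_self abs_ge_zero mult_mono norm_ge_zero order_trans)
  finally show ?thesis by simp
qed

locale setting =
  fixes K :: "real \<Rightarrow> real \<Rightarrow> 'v::{banach, second_countable_topology} \<Rightarrow> 'v" and F :: "real \<Rightarrow> 'v \<Rightarrow> 'v"
    and T C :: real and Lb Kb :: "real \<Rightarrow> real"
  assumes T: "0 < T" and C: "0 \<le> C"
    and lin: "\<And>t r. 0 \<le> r \<Longrightarrow> r \<le> t \<Longrightarrow> t \<le> T \<Longrightarrow> bounded_linear (K t r)"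
    and bdK: "\<And>t r z. 0 \<le> r \<Longrightarrow> r \<le> t \<Longrightarrow> t \<le> T \<Longrightarrow> norm (K t r z) \<le> C * norm z"
    and cont: "\<And>z. continuous_on {(t, r). 0 \<le> r \<and> r \<le> t \<and> t \<le> T} (\<lambda>(t, r). K t r z)"
    and Fmeas: "(\<lambda>p. F (fst p) (snd p)) \<in> borel_measurable (restrict_space borel ({0..T} \<times> UNIV))"
    and Lip: "set_integrable lborel {0..T} Lb"
             "\<forall>t\<in>{0..T}. \<forall>u v. norm (F t u - F t v) \<le> Lb t * norm (u - v)"
    and Kbd: "set_integrable lborel {0..T} Kb"
            "\<forall>t\<in>{0..T}. norm (F t 0) \<le> Kb t"
begin

lemma Kb_nonneg: "r \<in> {0..T} \<Longrightarrow> 0 \<le> Kb r"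
  using Kbd(2) norm_ge_zero order_trans by blast

lemma w0_int: "set_integrable lborel {0..T} (\<lambda>r. C * (Kb r + \<bar>Lb r\<bar> * B))"
proof -
  have "set_integrable lborel {0..T} (\<lambda>r. \<bar>Lb r\<bar> * B)"
    using set_integrable_abs[OF Lip(1)] by simp
  then have "set_integrable lborel {0..T} (\<lambda>r. Kb r + \<bar>Lb r\<bar> * B)"
    using Kbd(1) by (intro set_integral_add(1))
  then show ?thesis by simp
qed

lemma y_bound:
  assumes "continuous_on {0..T} y"
  obtains B where "0 \<le> B" "\<And>r. r \<in> {0..T} \<Longrightarrow> norm (y r) \<le> B"
proof -
  have "compact (y ` {0..T})" by (rule compact_continuous_image[OF assms]) simp
  then obtain B where "\<forall>v\<in>y ` {0..T}. norm v \<le> B" using compact_imp_bounded bounded_iff by metis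
  then show ?thesis using that[of "max 0 B"] by force
qed

lemma KF_bound:
  assumes "r \<in> {0..t}" "t \<le> T" "norm u \<le> B"
  shows "norm (K t r (F r u)) \<le> C * (Kb r + \<bar>Lb r\<bar> * B)"
proof -
  have "norm (K t r (F r u)) \<le> C * norm (F r u)" using bdK assms by auto
  also have "\<dots> \<le> C * (Kb r + \<bar>Lb r\<bar> * B)"
    using bound_F[OF Lip(2) Kbd(2), of r u B] assms C by (intro mult_left_mono) auto
  finally show ?thesis .
qed

lemma meas: "t \<in> {0..T} \<Longrightarrow> continuous_on {0..T} y \<Longrightarrow>
   (\<lambda>r. indicator {0..t} r *\<^sub>R K t r (F r (y r))) \<in> borel_measurable lborel"
  by (rule meas_KF[where C = C and T = T]) (use lin bdK cont Fmeas in auto)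

lemma int_KF:
  assumes t: "t \<in> {0..T}" and y: "continuous_on {0..T} y"
  shows "set_integrable lborel {0..t} (\<lambda>r. K t r (F r (y r)))"
proof -
  obtain B where B: "0 \<le> B" "\<And>r. r \<in> {0..T} \<Longrightarrow> norm (y r) \<le> B" using y_bound[OF y] by blast
  show ?thesis
  proof (rule set_integrable_bound[where f = "\<lambda>r. C * (Kb r + \<bar>Lb r\<bar> * B)"])
    show "set_integrable lborel {0..t} (\<lambda>r. C * (Kb r + \<bar>Lb r\<bar> * B))"
      by (rule set_integrable_subset[OF w0_int]) (use t in auto)
    show "set_borel_measurable lborel {0..t} (\<lambda>r. K t r (F r (y r)))"
      unfolding set_borel_measurable_def by (rule meas[OF t y])
    show "AE r in lborel. r \<in> {0..t} \<longrightarrow> norm (K t r (F r (y r))) \<le> norm (C * (Kb r + \<bar>Lb r\<bar> * B))"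
    proof (rule AE_I2, rule impI)
      fix r assume r: "r \<in> {0..t}"
      then have rT: "r \<in> {0..T}" using t by auto
      have "norm (K t r (F r (y r))) \<le> C * (Kb r + \<bar>Lb r\<bar> * B)"
        using KF_bound[OF r _ B(2)[OF rT]] t by auto
      also have "\<dots> \<le> norm (C * (Kb r + \<bar>Lb r\<bar> * B))" by simp
      finally show "norm (K t r (F r (y r))) \<le> norm (C * (Kb r + \<bar>Lb r\<bar> * B))" .
    qed
  qed
qed

lemma cont_K_at:
  assumes "0 \<le> r" "r < t" "t \<le> T"
  shows "continuous (at t within {0..T}) (\<lambda>s. K s r z)"
proof -
  have "continuous_on {r..T} ((\<lambda>(t, r). K t r z) \<circ> (\<lambda>s. (s, r)))"
    by (rule continuous_on_compose[OF _ continuous_on_subset[OF cont[of z]]])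
      (use assms in \<open>auto intro!: continuous_intros\<close>)
  then have "continuous (at t within {r..T}) (\<lambda>s. K s r z)"
    using assms by (simp add: o_def continuous_on_eq_continuous_within)
  moreover have "at t within {0..T} = at t within {r..T}"
    by (rule at_within_nhd[where S = "{r<..}"]) (use assms in auto)
  ultimately show ?thesis by (simp add: continuous_within)
qed

lemma cont_I:
  assumes y: "continuous_on {0..T} y"
  shows "continuous_on {0..T} (\<lambda>t. set_lebesgue_integral lborel {0..t} (\<lambda>r. K t r (F r (y r))))"
proof -
  obtain B where B: "0 \<le> B" "\<And>r. r \<in> {0..T} \<Longrightarrow> norm (y r) \<le> B" using y_bound[OF y] by blast
  show ?thesis
  proof (rule param_cont[where w = "\<lambda>r. indicator {0..T} r * (C * (Kb r + \<bar>Lb r\<bar> * B))"])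
    show "(\<lambda>r. indicator {0..t} r *\<^sub>R K t r (F r (y r))) \<in> borel_measurable lborel" if "t \<in> {0..T}" for t
      by (rule meas[OF that y])
    show "integrable lborel (\<lambda>r. indicator {0..T} r * (C * (Kb r + \<bar>Lb r\<bar> * B)))"
      using w0_int[of B] unfolding set_integrable_def by simp
    show "0 \<le> indicator {0..T} r * (C * (Kb r + \<bar>Lb r\<bar> * B))" for r
      using Kb_nonneg[of r] C B by (auto simp: indicator_def)
    show "norm (K t r (F r (y r))) \<le> indicator {0..T} r * (C * (Kb r + \<bar>Lb r\<bar> * B))"
      if "t \<in> {0..T}" "r \<in> {0..t}" for t r
      using KF_bound[OF that(2) _ B(2)] that by (auto simp: indicator_def)
    show "continuous (at t within {0..T}) (\<lambda>s. K s r (F r (y r)))" if "0 \<le> r" "r < t" "t \<le> T" for t r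
      by (rule cont_K_at[OF that])
  qed
qed

end


lemma small_int:
  fixes L :: "real \<Rightarrow> real"
  assumes L: "set_integrable lborel {0..T} L" "\<And>r. 0 \<le> L r" and d: "0 < d"
  shows "\<exists>h>0. \<forall>s t. 0 \<le> s \<longrightarrow> s \<le> t \<longrightarrow> t \<le> T \<longrightarrow> t - s \<le> h \<longrightarrow>
           set_lebesgue_integral lborel {s..t} L \<le> d"
proof -
  define \<Lambda> where "\<Lambda> t = set_lebesgue_integral lborel {0..t} L" for t
  have intL: "set_integrable lborel A L" if "A \<in> sets lborel" "A \<subseteq> {0..T}" for A
    by (rule set_integrable_subset[OF L(1) that])
  have c: "continuous_on {0..T} \<Lambda>"
    unfolding \<Lambda>_def
  proof (rule param_cont[where G = "\<lambda>t r. L r" and w = "\<lambda>r. indicator {0..T} r * L r"])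
    show "(\<lambda>r. indicator {0..t} r *\<^sub>R L r) \<in> borel_measurable lborel" if "t \<in> {0..T}" for t
      using intL[of "{0..t}"] that unfolding set_integrable_def by (auto intro: borel_measurable_integrable)
    show "integrable lborel (\<lambda>r. indicator {0..T} r * L r)" using L(1) unfolding set_integrable_def by simp
    show "0 \<le> indicator {0..T} r * L r" for r using L(2)[of r] by (simp add: indicator_def)
    show "norm (L r) \<le> indicator {0..T} r * L r" if "t \<in> {0..T}" "r \<in> {0..t}" for t r
      using that L(2)[of r] by (simp add: indicator_def)
  qed auto
  have "uniformly_continuous_on {0..T} \<Lambda>" by (rule compact_uniformly_continuous[OF c]) simp
  then obtain e where e: "e > 0" "\<And>x x'. x \<in> {0..T} \<Longrightarrow> x' \<in> {0..T} \<Longrightarrow> dist x' x < e \<Longrightarrow> dist (\<Lambda> x') (\<Lambda> x) < d"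
    unfolding uniformly_continuous_on_def using d by metis
  have pt: "set_lebesgue_integral lborel {s..s} L = 0" if "s \<in> {0..T}" for s
  proof -
    have m: "(\<lambda>x. indicator {s..s} x *\<^sub>R L x) \<in> borel_measurable lborel"
      using intL[of "{s..s}"] that unfolding set_integrable_def by (auto intro: borel_measurable_integrable)
    have "AE x in lborel. x \<noteq> s" by (rule AE_lborel_singleton)
    then have ae: "AE x in lborel. indicator {s..s} x *\<^sub>R L x = 0"
      by eventually_elim (auto simp: indicator_def)
    then have "integral\<^sup>L lborel (\<lambda>x. indicator {s..s} x *\<^sub>R L x) = integral\<^sup>L lborel (\<lambda>x. 0::real)"
      using integral_cong_AE[OF m _ ae] by simp
    then show ?thesis unfolding set_lebesgue_integral_def by simp
  qed
  have diff: "set_lebesgue_integral lborel {s..t} L = \<Lambda> t - \<Lambda> s"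
    if st: "0 \<le> s" "s \<le> t" "t \<le> T" for s t
  proof -
    have u1: "{0..t} = {0..<s} \<union> {s..t}" using st by auto
    have u2: "{0..s} = {0..<s} \<union> {s..s}" using st by auto
    have "\<Lambda> t = set_lebesgue_integral lborel {0..<s} L + set_lebesgue_integral lborel {s..t} L"
      unfolding \<Lambda>_def u1 using st by (intro set_integral_Un intL) auto
    moreover have "\<Lambda> s = set_lebesgue_integral lborel {0..<s} L + set_lebesgue_integral lborel {s..s} L"
      unfolding \<Lambda>_def u2 using st by (intro set_integral_Un intL) auto
    moreover have "set_lebesgue_integral lborel {s..s} L = 0" using pt st by auto
    ultimately show ?thesis by simp
  qed
  show ?thesis
  proof (intro exI[of _ "e / 2"] conjI allI impI)
    show "0 < e / 2" using e by simp
    fix s t assume st: "0 \<le> s" "s \<le> t" "t \<le> T" "t - s \<le> e / 2"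
    have "dist (\<Lambda> t) (\<Lambda> s) < d" using st e by (intro e(2)) (auto simp: dist_real_def)
    then show "set_lebesgue_integral lborel {s..t} L \<le> d" using diff[OF st(1-3)] by (simp add: dist_real_def)
  qed
qed

lemma bc:
  fixes f :: "real \<Rightarrow> 'a::real_normed_vector"
  assumes "continuous_on {0..T} f" "0 \<le> T"
  shows "(\<lambda>t. f (max 0 (min T t))) \<in> bcontfun"
proof -
  have cl: "continuous_on UNIV (\<lambda>t::real. max 0 (min T t))" by (intro continuous_intros)
  have c: "continuous_on UNIV (\<lambda>t. f (max 0 (min T t)))"
    by (rule continuous_on_compose2[OF assms(1) cl]) (use assms in auto)
  have "compact (f ` {0..T})" by (rule compact_continuous_image[OF assms(1)]) simp
  then obtain B where B: "\<forall>v\<in>f ` {0..T}. norm v \<le> B" using compact_imp_bounded bounded_iff by metis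
  show ?thesis
    by (rule bcontfun_normI[OF c, where b = B]) (use B assms in auto)
qed

context setting begin

lemma est:
  assumes s: "s \<in> {0..T}" and y1: "continuous_on {0..T} y1" and y2: "continuous_on {0..T} y2"
    and \<phi>: "continuous_on UNIV \<phi>" "\<And>r. 0 \<le> \<phi> r" "\<And>r. r \<in> {0..T} \<Longrightarrow> \<phi> r \<le> B\<phi>"
    and D: "\<And>r. r \<in> {0..s} \<Longrightarrow> norm (y1 r - y2 r) \<le> D * \<phi> r"
  shows "norm (set_lebesgue_integral lborel {0..s} (\<lambda>r. K s r (F r (y1 r))) -
               set_lebesgue_integral lborel {0..s} (\<lambda>r. K s r (F r (y2 r))))
         \<le> C * D * set_lebesgue_integral lborel {0..s} (\<lambda>r. \<bar>Lb r\<bar> * \<phi> r)"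
proof -
  have i1: "set_integrable lborel {0..s} (\<lambda>r. K s r (F r (y1 r)))" by (rule int_KF[OF s y1])
  have i2: "set_integrable lborel {0..s} (\<lambda>r. K s r (F r (y2 r)))" by (rule int_KF[OF s y2])
  have iL: "set_integrable lborel {0..s} (\<lambda>r. \<bar>Lb r\<bar> * \<phi> r)"
  proof (rule si_mult_cont[OF _ \<phi>(1), where B = B\<phi>])
    show "set_integrable lborel {0..s} (\<lambda>r. \<bar>Lb r\<bar>)"
      by (rule set_integrable_subset[OF set_integrable_abs[OF Lip(1)]]) (use s in auto)
  qed (use s \<phi> in auto)
  have "set_lebesgue_integral lborel {0..s} (\<lambda>r. K s r (F r (y1 r))) -
        set_lebesgue_integral lborel {0..s} (\<lambda>r. K s r (F r (y2 r)))
      = set_lebesgue_integral lborel {0..s} (\<lambda>r. K s r (F r (y1 r)) - K s r (F r (y2 r)))"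
    by (rule set_integral_diff(2)[OF i1 i2, symmetric])
  also have "norm \<dots> \<le> set_lebesgue_integral lborel {0..s} (\<lambda>r. norm (K s r (F r (y1 r)) - K s r (F r (y2 r))))"
    by (rule set_integral_norm_bound[OF set_integral_diff(1)[OF i1 i2]])
  also have "\<dots> \<le> set_lebesgue_integral lborel {0..s} (\<lambda>r. (C * D) * (\<bar>Lb r\<bar> * \<phi> r))"
  proof (rule set_integral_mono)
    show "set_integrable lborel {0..s} (\<lambda>r. norm (K s r (F r (y1 r)) - K s r (F r (y2 r))))"
      by (rule set_integrable_norm[OF set_integral_diff(1)[OF i1 i2]])
    show "set_integrable lborel {0..s} (\<lambda>r. (C * D) * (\<bar>Lb r\<bar> * \<phi> r))"
      using iL by simp
    fix r assume r: "r \<in> {0..s}"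
    then have rT: "r \<in> {0..T}" using s by auto
    interpret bl: bounded_linear "K s r" using lin r s by auto
    have "norm (K s r (F r (y1 r)) - K s r (F r (y2 r))) = norm (K s r (F r (y1 r) - F r (y2 r)))"
      by (simp add: bl.diff)
    also have "\<dots> \<le> C * norm (F r (y1 r) - F r (y2 r))" using bdK r s by auto
    also have "\<dots> \<le> C * (\<bar>Lb r\<bar> * norm (y1 r - y2 r))"
    proof (rule mult_left_mono[OF _ C])
      have "norm (F r (y1 r) - F r (y2 r)) \<le> Lb r * norm (y1 r - y2 r)" using Lip(2) rT by blast
      also have "\<dots> \<le> \<bar>Lb r\<bar> * norm (y1 r - y2 r)" by (intro mult_right_mono) auto
      finally show "norm (F r (y1 r) - F r (y2 r)) \<le> \<bar>Lb r\<bar> * norm (y1 r - y2 r)" .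
    qed
    also have "\<dots> \<le> C * (\<bar>Lb r\<bar> * (D * \<phi> r))"
      using D[OF r] C by (intro mult_left_mono) auto
    also have "\<dots> = (C * D) * (\<bar>Lb r\<bar> * \<phi> r)" by (simp add: algebra_simps)
    finally show "norm (K s r (F r (y1 r)) - K s r (F r (y2 r))) \<le> (C * D) * (\<bar>Lb r\<bar> * \<phi> r)" .
  qed
  also have "\<dots> = C * D * set_lebesgue_integral lborel {0..s} (\<lambda>r. \<bar>Lb r\<bar> * \<phi> r)"
    by simp
  finally show ?thesis .
qed

end


context setting begin

definition II :: "(real \<Rightarrow> 'v) \<Rightarrow> real \<Rightarrow> 'v" where
  "II y t = set_lebesgue_integral lborel {0..t} (\<lambda>r. K t r (F r (y r)))"

lemma cK0: "continuous_on {0..T} (\<lambda>t. K t 0 x)"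
proof -
  have "continuous_on {0..T} ((\<lambda>(t, r). K t r x) \<circ> (\<lambda>t. (t, 0)))"
    by (rule continuous_on_compose[OF _ continuous_on_subset[OF cont[of x]]])
      (auto intro!: continuous_intros)
  then show ?thesis by (simp add: o_def)
qed

theorem exist_unique:
  "\<exists>y. (continuous_on {0..T} y \<and> (\<forall>t\<in>{0..T}.
          set_integrable lborel {0..t} (\<lambda>r. K t r (F r (y r))) \<and>
          y t = K t 0 x + set_lebesgue_integral lborel {0..t} (\<lambda>r. K t r (F r (y r))))) \<and>
       (\<forall>z. (continuous_on {0..T} z \<and> (\<forall>t\<in>{0..T}.
          set_integrable lborel {0..t} (\<lambda>r. K t r (F r (z r))) \<and>
          z t = K t 0 x + set_lebesgue_integral lborel {0..t} (\<lambda>r. K t r (F r (z r))))) \<longrightarrow>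
        (\<forall>t\<in>{0..T}. z t = y t))"
proof -
  define L where "L r = \<bar>Lb r\<bar>" for r
  have L: "set_integrable lborel {0..T} L" "\<And>r. 0 \<le> L r"
    unfolding L_def using set_integrable_abs[OF Lip(1)] by auto
  define d where "d = 1 / (4 * C + 4)"
  have d: "0 < d" unfolding d_def using C by (intro divide_pos_pos) auto
  obtain h where h: "h > 0" "\<And>s t. 0 \<le> s \<Longrightarrow> s \<le> t \<Longrightarrow> t \<le> T \<Longrightarrow> t - s \<le> h \<Longrightarrow>
           set_lebesgue_integral lborel {s..t} L \<le> d"
    using small_int[OF L d] by blast
  define \<rho> where "\<rho> r = (2::real) powr (r / h)" for r
  have W: "set_lebesgue_integral lborel {0..t} (\<lambda>r. L r * \<rho> r) \<le> 2 * d * \<rho> t" if "t \<in> {0..T}" for t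
    unfolding \<rho>_def by (rule weight[OF L less_imp_le[OF d] h that])
  have \<rho>c: "continuous_on UNIV \<rho>" unfolding \<rho>_def using h(1) by (intro continuous_intros) auto
  have \<rho>pos: "0 < \<rho> r" for r by (simp add: \<rho>_def)
  have \<rho>mono: "\<rho> r \<le> \<rho> s" if "r \<le> s" for r s
    unfolding \<rho>_def using that h(1) by (intro powr_mono divide_right_mono) auto
  define cl where "cl t = max 0 (min T t)" for t
  have cl: "cl t \<in> {0..T}" for t using T by (auto simp: cl_def)
  have cl_id: "t \<in> {0..T} \<Longrightarrow> cl t = t" for t by (auto simp: cl_def)
  define yg where "yg g r = \<rho> r *\<^sub>R apply_bcontfun g r" for g :: "real \<Rightarrow>\<^sub>C 'v" and r
  have ygc: "continuous_on {0..T} (yg g)" for g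
    unfolding yg_def by (intro continuous_intros continuous_on_subset[OF \<rho>c]) auto
  define \<Phi> where "\<Phi> y t = (1 / \<rho> t) *\<^sub>R (K t 0 x + II y t)" for y t
  have \<Phi>c: "continuous_on {0..T} (\<Phi> y)" if "continuous_on {0..T} y" for y
    unfolding \<Phi>_def II_def
    by (intro continuous_intros cK0 cont_I[OF that] continuous_on_subset[OF \<rho>c]) (auto simp: \<rho>pos[THEN less_imp_neq, symmetric])
  define \<Psi> where "\<Psi> g = Bcontfun (\<lambda>t. \<Phi> (yg g) (cl t))" for g
  have \<Psi>app: "apply_bcontfun (\<Psi> g) t = \<Phi> (yg g) (cl t)" for g t
  proof -
    have "(\<lambda>t. \<Phi> (yg g) (cl t)) \<in> bcontfun"
      unfolding cl_def by (rule bc[OF \<Phi>c[OF ygc]]) (use T in auto)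
    then show ?thesis unfolding \<Psi>_def by (simp add: Bcontfun_inverse)
  qed
  have contr: "dist (\<Psi> g1) (\<Psi> g2) \<le> (1/2) * dist g1 g2" for g1 g2
  proof (rule dist_bound)
    fix t
    define s where "s = cl t"
    have s: "s \<in> {0..T}" using cl by (simp add: s_def)
    define D where "D = dist g1 g2"
    have D0: "0 \<le> D" by (simp add: D_def)
    have Dr: "norm (yg g1 r - yg g2 r) \<le> D * \<rho> r" for r
    proof -
      have "yg g1 r - yg g2 r = \<rho> r *\<^sub>R (apply_bcontfun g1 r - apply_bcontfun g2 r)"
        by (simp add: yg_def scaleR_diff_right)
      then have "norm (yg g1 r - yg g2 r) = \<rho> r * dist (apply_bcontfun g1 r) (apply_bcontfun g2 r)"
        using \<rho>pos[of r] by (simp add: dist_norm)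
      also have "\<dots> \<le> \<rho> r * D"
        unfolding D_def using \<rho>pos[of r] by (intro mult_left_mono dist_bounded) auto
      finally show ?thesis by (simp add: mult.commute)
    qed
    have E: "norm (II (yg g1) s - II (yg g2) s) \<le> C * D * set_lebesgue_integral lborel {0..s} (\<lambda>r. \<bar>Lb r\<bar> * \<rho> r)"
      unfolding II_def
      by (rule est[OF s ygc ygc \<rho>c less_imp_le[OF \<rho>pos], where B\<phi> = "\<rho> T"]) (use \<rho>mono Dr in auto)
    have "set_lebesgue_integral lborel {0..s} (\<lambda>r. \<bar>Lb r\<bar> * \<rho> r) \<le> 2 * d * \<rho> s"
      using W[OF s] by (simp add: L_def)
    then have E2: "norm (II (yg g1) s - II (yg g2) s) \<le> C * D * (2 * d * \<rho> s)"
      using E C D0 by (meson mult_left_mono mult_nonneg_nonneg order_trans)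
    have "dist (apply_bcontfun (\<Psi> g1) t) (apply_bcontfun (\<Psi> g2) t)
        = norm ((1 / \<rho> s) *\<^sub>R (II (yg g1) s - II (yg g2) s))"
      by (simp add: \<Psi>app \<Phi>_def s_def[symmetric] dist_norm scaleR_diff_right[symmetric])
    also have "\<dots> = (1 / \<rho> s) * norm (II (yg g1) s - II (yg g2) s)"
      using \<rho>pos[of s] by simp
    also have "\<dots> \<le> (1 / \<rho> s) * (C * D * (2 * d * \<rho> s))"
      using E2 \<rho>pos[of s] by (intro mult_left_mono) auto
    also have "\<dots> = (2 * C * d) * D" using \<rho>pos[of s] by (simp add: field_simps)
    also have "\<dots> \<le> (1/2) * D"
    proof (rule mult_right_mono[OF _ D0])
      have "4 * C + 4 \<noteq> 0" using C by simp
      then have dd: "d * (4 * C + 4) = 1" by (simp add: d_def)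
      then have "4 * (C * d) + 4 * d = 1" by (simp only: distrib_left mult.commute mult.left_commute)
      moreover have "2 * C * d = 2 * (C * d)" by (simp only: mult.assoc)
      ultimately show "2 * C * d \<le> 1/2" using d by linarith
    qed
    finally show "dist (apply_bcontfun (\<Psi> g1) t) (apply_bcontfun (\<Psi> g2) t) \<le> 1 / 2 * dist g1 g2"
      by (simp add: D_def)
  qed
  have "\<exists>!g. \<Psi> g = g"
  proof (rule banach_fix_type)
    show "0 \<le> (1/2::real)" "(1/2::real) < 1" by simp_all
    show "\<forall>x y. dist (\<Psi> x) (\<Psi> y) \<le> 1/2 * dist x y" using contr by blast
  qed
  then obtain g0 where g0: "\<Psi> g0 = g0" and g0u: "\<And>g. \<Psi> g = g \<Longrightarrow> g = g0"
    by (metis ex1E)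
  define y0 where "y0 = yg g0"
  have y0c: "continuous_on {0..T} y0" unfolding y0_def by (rule ygc)
  have fix_eq: "y t = K t 0 x + II y t"
    if "t \<in> {0..T}" "\<Phi> y t = (1 / \<rho> t) *\<^sub>R y t" for y t
  proof -
    have "(1 / \<rho> t) *\<^sub>R y t = (1 / \<rho> t) *\<^sub>R (K t 0 x + II y t)" using that(2) unfolding \<Phi>_def by (rule sym)
    then show ?thesis using \<rho>pos[of t] by simp
  qed
  show ?thesis
  proof (intro exI[of _ y0] conjI allI impI ballI)
    show "continuous_on {0..T} y0" by (rule y0c)
    fix t assume t: "t \<in> {0..T}"
    show "set_integrable lborel {0..t} (\<lambda>r. K t r (F r (y0 r)))" by (rule int_KF[OF t y0c])
    have "\<Phi> y0 t = (1 / \<rho> t) *\<^sub>R y0 t"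
    proof -
      have "\<Phi> y0 t = apply_bcontfun (\<Psi> g0) t" using \<Psi>app cl_id[OF t] by (simp add: y0_def)
      also have "\<dots> = apply_bcontfun g0 t" by (simp add: g0)
      also have "\<dots> = (1 / \<rho> t) *\<^sub>R y0 t" using \<rho>pos[of t] by (simp add: y0_def yg_def)
      finally show ?thesis .
    qed
    then show "y0 t = K t 0 x + set_lebesgue_integral lborel {0..t} (\<lambda>r. K t r (F r (y0 r)))"
      using fix_eq[OF t] by (simp add: II_def)
  next
    fix z t
    assume zs: "continuous_on {0..T} z \<and> (\<forall>t\<in>{0..T}.
          set_integrable lborel {0..t} (\<lambda>r. K t r (F r (z r))) \<and>
          z t = K t 0 x + set_lebesgue_integral lborel {0..t} (\<lambda>r. K t r (F r (z r))))"
      and t: "t \<in> {0..T}"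
    have zc: "continuous_on {0..T} z" using zs by blast
    have zeq: "z s = K s 0 x + II z s" if "s \<in> {0..T}" for s using zs that by (simp add: II_def)
    have zwc: "continuous_on {0..T} (\<lambda>s. (1 / \<rho> s) *\<^sub>R z s)"
      by (intro continuous_intros zc continuous_on_subset[OF \<rho>c]) (auto simp: \<rho>pos[THEN less_imp_neq, symmetric])
    define gz where "gz = Bcontfun (\<lambda>s. (1 / \<rho> (cl s)) *\<^sub>R z (cl s))"
    have gzapp: "apply_bcontfun gz s = (1 / \<rho> (cl s)) *\<^sub>R z (cl s)" for s
    proof -
      have "(\<lambda>s. (1 / \<rho> (cl s)) *\<^sub>R z (cl s)) \<in> bcontfun"
        unfolding cl_def by (rule bc[OF zwc]) (use T in auto)
      then show ?thesis unfolding gz_def by (simp add: Bcontfun_inverse)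
    qed
    have ygz: "yg gz r = z r" if "r \<in> {0..T}" for r
      using \<rho>pos[of r] that by (simp add: yg_def gzapp cl_id)
    have IIz: "II (yg gz) s = II z s" if "s \<in> {0..T}" for s
      unfolding II_def by (rule set_lebesgue_integral_cong) (use that ygz in auto)
    have "\<Psi> gz = gz"
    proof (rule bcontfun_eqI)
      fix s
      have "apply_bcontfun (\<Psi> gz) s = (1 / \<rho> (cl s)) *\<^sub>R (K (cl s) 0 x + II z (cl s))"
        by (simp add: \<Psi>app \<Phi>_def IIz[OF cl])
      also have "\<dots> = (1 / \<rho> (cl s)) *\<^sub>R z (cl s)" using zeq[OF cl] by simp
      also have "\<dots> = apply_bcontfun gz s" by (simp add: gzapp)
      finally show "apply_bcontfun (\<Psi> gz) s = apply_bcontfun gz s" .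
    qed
    then have "gz = g0" by (rule g0u)
    have "z t = yg gz t" using ygz[OF t] by simp
    also have "\<dots> = y0 t" by (simp add: y0_def \<open>gz = g0\<close>)
    finally show "z t = y0 t" .
  qed
qed

end


lemma compact_tri: "compact {(t, s). 0 \<le> s \<and> s \<le> t \<and> t \<le> (T::real)}"
proof -
  have "{(t, s). 0 \<le> s \<and> s \<le> t \<and> t \<le> T} = {p. 0 \<le> snd p} \<inter> {p. snd p \<le> fst p} \<inter> {p. fst p \<le> T}"
    by auto
  moreover have "closed \<dots>"
    by (intro closed_Int closed_Collect_le continuous_intros)
  ultimately have cl: "closed {(t, s). 0 \<le> s \<and> s \<le> t \<and> t \<le> (T::real)}" by simp
  have "{(t, s). 0 \<le> s \<and> s \<le> t \<and> t \<le> (T::real)} \<subseteq> cbox (0, 0) (T, T)"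
    by (auto simp: cbox_Pair_eq)
  then have "bounded {(t, s). 0 \<le> s \<and> s \<le> t \<and> t \<le> (T::real)}"
    using bounded_cbox bounded_subset by blast
  with cl show ?thesis using compact_eq_bounded_closed by blast
qed

lemma cont_bounded_on_compact:
  fixes f :: "'a::metric_space \<Rightarrow> 'b::real_normed_vector"
  assumes "continuous_on S f" "compact S"
  shows "\<exists>B. \<forall>p\<in>S. norm (f p) \<le> B"
proof -
  have "compact (f ` S)" by (rule compact_continuous_image[OF assms])
  then show ?thesis using compact_imp_bounded bounded_iff by (metis image_eqI)
qed

theorem main_omega:
  fixes BH :: "real \<Rightarrow> 'w \<Rightarrow> real" and \<omega> :: 'w
    and T :: real
    and SB :: "real \<Rightarrow> 'v::{real_inner, banach, second_countable_topology} \<Rightarrow> 'v" and U :: "real \<Rightarrow> real \<Rightarrow> 'v \<Rightarrow> 'v"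
    and F :: "real \<Rightarrow> 'v \<Rightarrow> 'v" and Lbar Kbar :: "real \<Rightarrow> real" and x :: 'v
  assumes T: "0 < T"
    and BHc: "continuous_on {0..} (\<lambda>t. BH t \<omega>)"
    and SBlin: "\<And>u. bounded_linear (SB u)" and SBc: "\<And>z. continuous_on UNIV (\<lambda>u. SB u z)"
    and Ulin: "\<And>s t. 0 \<le> s \<and> s \<le> t \<and> t \<le> T \<Longrightarrow> bounded_linear (U t s)"
    and Uc: "\<And>z. continuous_on {(t, s). 0 \<le> s \<and> s \<le> t \<and> t \<le> T} (\<lambda>(t, s). U t s z)"
    and Fmeas: "(\<lambda>p. F (fst p) (snd p)) \<in> borel_measurable (restrict_space borel ({0..T} \<times> UNIV))"
    and Lip: "set_integrable lborel {0..T} Lbar"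
             "\<forall>t\<in>{0..T}. \<forall>u v. norm (F t u - F t v) \<le> Lbar t * norm (u - v)"
    and Kb: "set_integrable lborel {0..T} Kbar"
            "\<forall>t\<in>{0..T}. norm (F t 0) \<le> Kbar t"
  shows "\<exists>y. is_solution SB U BH \<omega> F T x y \<and>
           (\<forall>z. is_solution SB U BH \<omega> F T x z \<longrightarrow> (\<forall>t\<in>{0..T}. z t = y t))"
proof -
  define tri where "tri = {(t, s). 0 \<le> s \<and> s \<le> t \<and> t \<le> T}"
  have BHc': "continuous_on {0..T} (\<lambda>t. BH t \<omega>)" by (rule continuous_on_subset[OF BHc]) auto
  obtain R0 where R0: "\<And>t. t \<in> {0..T} \<Longrightarrow> norm (BH t \<omega>) \<le> R0"
    using cont_bounded_on_compact[OF BHc'] by (metis compact_Icc)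
  define R where "R = 2 * \<bar>R0\<bar>"
  have Rb: "BH t \<omega> - BH r \<omega> \<in> {-R..R}" if "t \<in> {0..T}" "r \<in> {0..T}" for t r
    using R0[OF that(1)] R0[OF that(2)] by (auto simp: R_def)
  obtain CU where CU: "CU \<ge> 0" "\<forall>p\<in>tri. \<forall>z. norm (U (fst p) (snd p) z) \<le> CU * norm z"
  proof -
    have "\<exists>C\<ge>0. \<forall>p\<in>tri. \<forall>z. norm (U (fst p) (snd p) z) \<le> C * norm z"
    proof (rule ubp)
      show "bounded_linear (U (fst p) (snd p))" if "p \<in> tri" for p using Ulin that by (auto simp: tri_def)
      fix z
      have "continuous_on tri (\<lambda>p. U (fst p) (snd p) z)"
        using Uc[of z] unfolding tri_def by (simp add: case_prod_beta)
      then show "\<exists>B. \<forall>p\<in>tri. norm (U (fst p) (snd p) z) \<le> B"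
        by (rule cont_bounded_on_compact) (simp add: tri_def compact_tri)
    qed
    then show ?thesis using that by blast
  qed
  obtain CS where CS: "CS \<ge> 0" "\<forall>u\<in>{-R..R}. \<forall>z. norm (SB u z) \<le> CS * norm z"
  proof -
    have "\<exists>C\<ge>0. \<forall>u\<in>{-R..R}. \<forall>z. norm (SB u z) \<le> C * norm z"
    proof (rule ubp)
      show "bounded_linear (SB u)" for u by (rule SBlin)
      fix z
      show "\<exists>B. \<forall>u\<in>{-R..R}. norm (SB u z) \<le> B"
        by (rule cont_bounded_on_compact[OF continuous_on_subset[OF SBc]]) auto
    qed
    then show ?thesis using that by blast
  qed
  define K where "K = UY SB U BH \<omega>"
  have Kdef: "K t r z = SB (BH t \<omega> - BH r \<omega>) (U (t - r) 0 z)" for t r z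
    by (simp add: K_def UY_def)
  have CC: "0 \<le> CS * CU" using CS CU by simp
    have lin': "bounded_linear (K t r)" if "0 \<le> r" "r \<le> t" "t \<le> T" for t r
    proof -
      have "bounded_linear (U (t - r) 0)" using that by (intro Ulin) auto
      then have "bounded_linear (\<lambda>z. SB (BH t \<omega> - BH r \<omega>) (U (t - r) 0 z))"
        by (rule bounded_linear_compose[OF SBlin])
      then show ?thesis by (simp add: Kdef[abs_def])
    qed
    have bd': "norm (K t r z) \<le> CS * CU * norm z" if "0 \<le> r" "r \<le> t" "t \<le> T" for t r z
    proof -
      have "norm (K t r z) \<le> CS * norm (U (t - r) 0 z)"
        unfolding Kdef using CS(2) Rb[of t r] that by auto
      also have "\<dots> \<le> CS * (CU * norm z)"
        using CU(2) that CS(1) by (intro mult_left_mono) (auto simp: tri_def)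
      finally show ?thesis by (simp add: mult.assoc)
    qed
    have cont': "continuous_on {(t, r). 0 \<le> r \<and> r \<le> t \<and> t \<le> T} (\<lambda>(t, r). K t r z)" for z
    proof -
      have j: "continuous_on ({-R..R} \<times> UNIV) (\<lambda>q. SB (fst q) (snd q))"
      proof (rule joint_cont[OF SBlin, where C = CS])
        show "norm (SB p z) \<le> CS * norm z" if "p \<in> {-R..R}" for p z using CS(2) that by blast
        show "continuous_on {-R..R} (\<lambda>p. SB p z)" for z by (rule continuous_on_subset[OF SBc]) simp
      qed
      have c1: "continuous_on tri (\<lambda>p. BH (fst p) \<omega> - BH (snd p) \<omega>)"
        by (intro continuous_intros continuous_on_compose2[OF BHc'])  (auto simp: tri_def)
      have c2: "continuous_on tri (\<lambda>p. U (fst p - snd p) 0 z)"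
      proof -
        have "continuous_on tri ((\<lambda>(t, s). U t s z) \<circ> (\<lambda>p. (fst p - snd p, 0::real)))"
          by (rule continuous_on_compose[OF _ continuous_on_subset[OF Uc[of z]]])
            (auto intro!: continuous_intros simp: tri_def)
        then show ?thesis by (simp add: o_def)
      qed
      have "continuous_on tri ((\<lambda>q. SB (fst q) (snd q)) \<circ> (\<lambda>p. (BH (fst p) \<omega> - BH (snd p) \<omega>, U (fst p - snd p) 0 z)))"
        by (rule continuous_on_compose[OF continuous_on_Pair[OF c1 c2] continuous_on_subset[OF j]])
          (use Rb in \<open>auto simp: tri_def\<close>)
      then show ?thesis by (simp add: o_def Kdef tri_def case_prod_beta)
    qed
  interpret setting K F T "CS * CU" Lbar Kbar
    by (rule setting.intro[OF T CC lin' bd' cont' Fmeas Lip Kb])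
  from exist_unique[of x] show ?thesis
    unfolding is_solution_def K_def by simp
qed


theorem mainTheorem1:
  fixes M :: "'w measure" and BH :: "real \<Rightarrow> 'w \<Rightarrow> real"
    and H T w Mr \<alpha> :: real
    and A B :: "'v::{real_inner, banach, second_countable_topology} \<Rightarrow> 'v"
    and D DB :: "'v set"
    and SB :: "real \<Rightarrow> 'v \<Rightarrow> 'v" and U :: "real \<Rightarrow> real \<Rightarrow> 'v \<Rightarrow> 'v"
    and F :: "real \<Rightarrow> 'v \<Rightarrow> 'v" and Lbar Kbar :: "real \<Rightarrow> real" and x :: 'v
  assumes prob: "prob_space M" and compl: "complete_measure M"
    and H: "1/2 < H" "H < 1"
    and fbm: "fBm M H BH"
    and T: "0 < T"
    and A1: "lin_op A D" "closed_op A D" "densely_defined D"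
    and A2: "w < 0" "0 < Mr" "resolvent_condition A D w Mr"
    and B1: "adj_dom A D \<subseteq> adj_sq_dom B DB"
    and B2: "lin_op B DB" "closed_op B DB" "densely_defined DB" "generates_C0_group B DB SB"
    and B3: "closed_op (\<lambda>z. B (B z)) (sq_dom B DB)" "0 < \<alpha>" "\<alpha> < 1"
            "frac_pow_dom A D \<alpha> \<subseteq> sq_dom B DB"
    and AB: "\<forall>u. \<forall>z\<in>D. SB u z \<in> D \<and> SB u (A z) = A (SB u z)"
    and U: "evolution_system_gen (\<lambda>t z. A z - (H * t powr (2 * H - 1)) *\<^sub>R B (B z)) D T U"
    and Fmeas: "(\<lambda>p. F (fst p) (snd p)) \<in> borel_measurable (restrict_space borel ({0..T} \<times> UNIV))"
    and Lip: "set_integrable lborel {0..T} Lbar"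
             "\<forall>t\<in>{0..T}. \<forall>u v. norm (F t u - F t v) \<le> Lbar t * norm (u - v)"
    and Kb: "set_integrable lborel {0..T} Kbar"
            "\<forall>t\<in>{0..T}. norm (F t 0) \<le> Kbar t"
  shows "AE \<omega> in M. \<exists>y. is_solution SB U BH \<omega> F T x y \<and>
           (\<forall>z. is_solution SB U BH \<omega> F T x z \<longrightarrow> (\<forall>t\<in>{0..T}. z t = y t))"
proof -
  have BHc: "\<forall>\<omega>\<in>space M. continuous_on {0..} (\<lambda>t. BH t \<omega>)"
    using fbm unfolding fBm_def by blast
  have SBlin: "\<And>u. bounded_linear (SB u)" and SBc: "\<And>z. continuous_on UNIV (\<lambda>u. SB u z)"
    using B2(4) unfolding generates_C0_group_def by blast+
  have Ulin: "\<And>s t. 0 \<le> s \<and> s \<le> t \<and> t \<le> T \<Longrightarrow> bounded_linear (U t s)"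
    and Uc: "\<And>z. continuous_on {(t, s). 0 \<le> s \<and> s \<le> t \<and> t \<le> T} (\<lambda>(t, s). U t s z)"
    using U unfolding evolution_system_gen_def by blast+
  show ?thesis
  proof (rule AE_I2)
    fix \<omega> assume "\<omega> \<in> space M"
    then have "continuous_on {0..} (\<lambda>t. BH t \<omega>)" using BHc by blast
    then show "\<exists>y. is_solution SB U BH \<omega> F T x y \<and>
           (\<forall>z. is_solution SB U BH \<omega> F T x z \<longrightarrow> (\<forall>t\<in>{0..T}. z t = y t))"
      by (rule main_omega[OF T _ SBlin SBc Ulin Uc Fmeas Lip Kb])
  qed
qed

end
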